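(* Let $\alpha\in\mathbb{R}$ and $\{\mu_n\}_{n\in\mathbb{N}}\cup\{\mu\}\subset\mathcal{M}(\mathbb{R})$. (a) If $F^{(\alpha)}_{\mu_n}(x)\to F^{(\alpha)}_\mu(x)$ at all continuity points $x$ of $\mu$ and $\{\mu_n\}$ is bounded on compact sets, then $\mu_n\to\mu$ vaguely. (b) If $\mu_n\to\mu$ vaguely, $\alpha$ is a continuity point of $\mu$, and $\{\mu_n\}$ has no mass at every continuity point of $\mu$, then $F^{(\alpha)}_{\mu_n}(x)\to F^{(\alpha)}_\mu(x)$ at all continuity points $x$ of $\mu$. Moreover, both parts remain true for $\alpha=-\infty$ (resp. $\alpha=+\infty$), where in (a) one requires in addition that $\sup_n|\mu_n|((-\infty,c])<\infty$ for every $c\in\mathbb{R}$ (resp. $\sup_n|\mu_n|((c,\infty))<\infty$ for every $c\in\mathbb{R}$), and in (b) the requirement that $\alpha$ be a continuity point is replaced by the requirement that $\{\mu_n\}$ has no mass at $-\infty$ (resp. $+\infty$), i.e. for every $\varepsilon>0$ there is $c\in\mathbb{R}$ with $\limsup_n|\mu_n|((-\infty,c))\le\varepsilon$ (resp. $\limsup_n|\mu_n|((c,\infty))\le\varepsilon$).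
   Context: $\mathcal{M}(\mathbb{R})$ is the set of finite signed Borel measures on $\mathbb{R}$ (all are Radon); $|\mu|$ denotes the variation measure. For $\alpha\in\mathbb{R}$, $F^{(\alpha)}_\mu(x)=\mu((\alpha,x])$ for $x\ge\alpha$ and $F^{(\alpha)}_\mu(x)=-\mu((x,\alpha])$ for $x<\alpha$; further $F^{(-\infty)}_\mu(x)=\mu((-\infty,x])$ and $F^{(+\infty)}_\mu(x)=-\mu((x,\infty))$. A point $x\in\mathbb{R}$ is a continuity point of $\mu$ if $\mu(\{x\})=0$. Vague convergence $\mu_n\to\mu$ means $\int f\,d\mu_n\to\int f\,d\mu$ for all continuous $f$ with compact support. $\{\mu_n\}$ is bounded on compact sets if $\sup_n|\mu_n|(K)<\infty$ for every compact $K\subset\mathbb{R}$. $\{\mu_n\}$ has no mass at a point $x\in\mathbb{R}$ if for every $\varepsilon>0$ there is an open neighbourhood $N$ of $x$ with $\limsup_{n\to\infty}|\mu_n|(N)\le\varepsilon$. *)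

theory Defs
  imports "HOL-Analysis.Analysis" "HOL-Library.Disjoint_Sets"
begin

text \<open>A finite signed Borel measure on the reals is represented by a pair (P, N) of
  finite Borel measures, standing for the set function P - N (Jordan decomposition
  shows every finite signed measure arises this way). All notions below depend only
  on the difference P - N.\<close>

type_synonym smeasure = "real measure \<times> real measure"

definition finite_borel :: "real measure \<Rightarrow> bool" where
  "finite_borel M \<longleftrightarrow> sets M = sets borel \<and> finite_measure M"

definition is_smeasure :: "smeasure \<Rightarrow> bool" where
  "is_smeasure \<mu> \<longleftrightarrow> finite_borel (fst \<mu>) \<and> finite_borel (snd \<mu>)"

definition sm :: "smeasure \<Rightarrow> real set \<Rightarrow> real" where
  "sm \<mu> A = measure (fst \<mu>) A - measure (snd \<mu>) A"

definition var :: "smeasure \<Rightarrow> real set \<Rightarrow> real" where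
  "var \<mu> A = Sup {(\<Sum>B\<in>P. \<bar>sm \<mu> B\<bar>) | P. finite P \<and> P \<subseteq> sets borel \<and> disjoint P \<and> \<Union>P = A}"

definition sint :: "smeasure \<Rightarrow> (real \<Rightarrow> real) \<Rightarrow> real" where
  "sint \<mu> f = integral\<^sup>L (fst \<mu>) f - integral\<^sup>L (snd \<mu>) f"

definition Fdist :: "ereal \<Rightarrow> smeasure \<Rightarrow> real \<Rightarrow> real" where
  "Fdist \<alpha> \<mu> x =
     (if \<alpha> = -\<infinity> then sm \<mu> {..x}
      else if \<alpha> = \<infinity> then - sm \<mu> {x<..}
      else if real_of_ereal \<alpha> \<le> x then sm \<mu> {real_of_ereal \<alpha><..x}
      else - sm \<mu> {x<..real_of_ereal \<alpha>})"

definition cont_point :: "smeasure \<Rightarrow> real \<Rightarrow> bool" where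
  "cont_point \<mu> x \<longleftrightarrow> sm \<mu> {x} = 0"

definition vague_conv :: "(nat \<Rightarrow> smeasure) \<Rightarrow> smeasure \<Rightarrow> bool" where
  "vague_conv \<mu>s \<mu> \<longleftrightarrow>
     (\<forall>f::real \<Rightarrow> real. continuous_on UNIV f \<and> (\<exists>K. compact K \<and> (\<forall>x. x \<notin> K \<longrightarrow> f x = 0)) \<longrightarrow>
        (\<lambda>n. sint (\<mu>s n) f) \<longlonglongrightarrow> sint \<mu> f)"

definition bounded_on_compacts :: "(nat \<Rightarrow> smeasure) \<Rightarrow> bool" where
  "bounded_on_compacts \<mu>s \<longleftrightarrow> (\<forall>K::real set. compact K \<longrightarrow> bdd_above (range (\<lambda>n. var (\<mu>s n) K)))"

definition no_mass_at :: "(nat \<Rightarrow> smeasure) \<Rightarrow> real \<Rightarrow> bool" where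
  "no_mass_at \<mu>s x \<longleftrightarrow> (\<forall>\<epsilon>>0. \<exists>N. open N \<and> x \<in> N \<and>
      limsup (\<lambda>n. ereal (var (\<mu>s n) N)) \<le> ereal \<epsilon>)"

definition no_mass_at_minf :: "(nat \<Rightarrow> smeasure) \<Rightarrow> bool" where
  "no_mass_at_minf \<mu>s \<longleftrightarrow> (\<forall>\<epsilon>>0. \<exists>c. limsup (\<lambda>n. ereal (var (\<mu>s n) {..<c})) \<le> ereal \<epsilon>)"

definition no_mass_at_pinf :: "(nat \<Rightarrow> smeasure) \<Rightarrow> bool" where
  "no_mass_at_pinf \<mu>s \<longleftrightarrow> (\<forall>\<epsilon>>0. \<exists>c. limsup (\<lambda>n. ereal (var (\<mu>s n) {c<..})) \<le> ereal \<epsilon>)"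

definition Fconv :: "ereal \<Rightarrow> (nat \<Rightarrow> smeasure) \<Rightarrow> smeasure \<Rightarrow> bool" where
  "Fconv \<alpha> \<mu>s \<mu> \<longleftrightarrow> (\<forall>x. cont_point \<mu> x \<longrightarrow> (\<lambda>n. Fdist \<alpha> (\<mu>s n) x) \<longlonglongrightarrow> Fdist \<alpha> \<mu> x)"

end

theory Submission
  imports Defs
begin


lemma fb_sets: "finite_borel M \<Longrightarrow> sets M = sets borel"
  unfolding finite_borel_def by simp
lemma fb_fin: "finite_borel M \<Longrightarrow> finite_measure M"
  unfolding finite_borel_def by simp
lemma fb_space: "finite_borel M \<Longrightarrow> space M = UNIV"
  unfolding finite_borel_def by (metis sets_eq_imp_space_eq space_borel)
lemma fb_meas: "finite_borel M \<Longrightarrow> f \<in> borel_measurable borel \<Longrightarrow> (f::real\<Rightarrow>real) \<in> borel_measurable M"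
  using fb_sets measurable_cong_sets by blast
lemma fb_setsI: "finite_borel M \<Longrightarrow> A \<in> sets borel \<Longrightarrow> A \<in> sets M"
  using fb_sets by blast

lemma fb_int:
  assumes "finite_borel M" "f \<in> borel_measurable borel" "\<And>x. \<bar>f x\<bar> \<le> c"
  shows "integrable M (f::real\<Rightarrow>real)"
proof -
  interpret finite_measure M using fb_fin[OF assms(1)] .
  show ?thesis
    by (rule integrable_const_bound[where B=c]) (simp add: assms(3), rule fb_meas[OF assms(1,2)])
qed

lemma fb_intbound:
  assumes "finite_borel M" "f \<in> borel_measurable borel" "\<And>x. \<bar>f x\<bar> \<le> c"
  shows "\<bar>integral\<^sup>L M (f::real\<Rightarrow>real)\<bar> \<le> c * measure M UNIV"
proof -
  interpret finite_measure M using fb_fin[OF assms(1)] .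
  have "\<bar>integral\<^sup>L M f\<bar> \<le> integral\<^sup>L M (\<lambda>x. \<bar>f x\<bar>)"
    by (rule integral_abs_bound)
  also have "\<dots> \<le> integral\<^sup>L M (\<lambda>x. c)"
    apply (rule integral_mono)
    using fb_int[OF assms] assms(3) by auto
  also have "\<dots> = c * measure M UNIV"
    using fb_space[OF assms(1)] by simp
  finally show ?thesis .
qed
lemma sm_Un:
  assumes "is_smeasure \<mu>" "A \<in> sets borel" "B \<in> sets borel" "A \<inter> B = {}"
  shows "sm \<mu> (A \<union> B) = sm \<mu> A + sm \<mu> B"
proof -
  have *: "measure M (A \<union> B) = measure M A + measure M B" if "finite_borel M" for M
  proof -
    interpret finite_measure M using fb_fin[OF that] .
    show ?thesis using assms fb_setsI[OF that] by (intro finite_measure_Union) auto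
  qed
  show ?thesis using assms * unfolding sm_def is_smeasure_def by simp
qed

definition bbf :: "(real \<Rightarrow> real) \<Rightarrow> bool" where
  "bbf f \<longleftrightarrow> f \<in> borel_measurable borel \<and> (\<exists>c. \<forall>x. \<bar>f x\<bar> \<le> c)"

lemma bbf_int: "finite_borel M \<Longrightarrow> bbf f \<Longrightarrow> integrable M f"
  unfolding bbf_def using fb_int by blast

lemma sint_diff:
  assumes "is_smeasure \<mu>" "bbf f" "bbf g"
  shows "sint \<mu> (\<lambda>x. f x - g x) = sint \<mu> f - sint \<mu> g"
  using assms bbf_int unfolding sint_def is_smeasure_def by simp

lemma sint_add:
  assumes "is_smeasure \<mu>" "bbf f" "bbf g"
  shows "sint \<mu> (\<lambda>x. f x + g x) = sint \<mu> f + sint \<mu> g"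
  using assms bbf_int unfolding sint_def is_smeasure_def by simp

lemma sint_cmult:
  shows "sint \<mu> (\<lambda>x. c * f x) = c * sint \<mu> f"
  unfolding sint_def by (simp add: algebra_simps)

lemma sint_sum:
  assumes "is_smeasure \<mu>" "finite I" "\<And>i. i \<in> I \<Longrightarrow> bbf (f i)"
  shows "sint \<mu> (\<lambda>x. \<Sum>i\<in>I. f i x) = (\<Sum>i\<in>I. sint \<mu> (f i))"
  using assms bbf_int unfolding sint_def is_smeasure_def by (simp add: sum_subtractf)

lemma sint_indicator:
  assumes "is_smeasure \<mu>" "A \<in> sets borel"
  shows "sint \<mu> (indicator A) = sm \<mu> A"
  using assms fb_space unfolding sint_def sm_def is_smeasure_def by simp

lemma bbf_indicator: "A \<in> sets borel \<Longrightarrow> bbf (indicator A)"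
  unfolding bbf_def by (auto intro!: exI[of _ 1] simp: indicator_def)

lemma bbf_add: assumes "bbf f" "bbf g" shows "bbf (\<lambda>x. f x + g x)"
proof -
  obtain c d where c: "\<And>x. \<bar>f x\<bar> \<le> c" and d: "\<And>x. \<bar>g x\<bar> \<le> d"
    and m: "f \<in> borel_measurable borel" "g \<in> borel_measurable borel"
    using assms unfolding bbf_def by blast
  have "\<bar>f x + g x\<bar> \<le> c + d" for x
    by (rule order_trans[OF abs_triangle_ineq add_mono[OF c d]])
  then show ?thesis using m unfolding bbf_def by (intro conjI exI[of _ "c+d"]) auto
qed

lemma bbf_diff: assumes "bbf f" "bbf g" shows "bbf (\<lambda>x. f x - g x)"
proof -
  obtain c d where c: "\<And>x. \<bar>f x\<bar> \<le> c" and d: "\<And>x. \<bar>g x\<bar> \<le> d"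
    and m: "f \<in> borel_measurable borel" "g \<in> borel_measurable borel"
    using assms unfolding bbf_def by blast
  have "\<bar>f x - g x\<bar> \<le> c + d" for x
    by (rule order_trans[OF abs_triangle_ineq4 add_mono[OF c d]])
  then show ?thesis using m unfolding bbf_def by (intro conjI exI[of _ "c+d"]) auto
qed

lemma bbf_cmult: "bbf f \<Longrightarrow> bbf (\<lambda>x. a * f x)"
  unfolding bbf_def
  apply (auto)
  subgoal for c by (rule exI[of _ "\<bar>a\<bar>*c"]) (simp add: abs_mult mult_left_mono)
  done

lemma sint_bound:
  assumes "is_smeasure \<mu>" "f \<in> borel_measurable borel" "\<And>x. \<bar>f x\<bar> \<le> c"
  shows "\<bar>sint \<mu> f\<bar> \<le> c * (measure (fst \<mu>) UNIV + measure (snd \<mu>) UNIV)"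
  using fb_intbound[of "fst \<mu>" f c] fb_intbound[of "snd \<mu>" f c] assms
  unfolding sint_def is_smeasure_def by (simp add: distrib_left)




lemma disjoint_fam_id: "disjoint P \<Longrightarrow> disjoint_family_on (\<lambda>B. B) P"
  unfolding disjoint_def disjoint_family_on_def by auto

lemma fb_sum_le: 
  assumes "finite_borel M" "finite P" "P \<subseteq> sets borel" "disjoint P"
  shows "(\<Sum>B\<in>P. measure M B) \<le> measure M UNIV"
proof -
  interpret finite_measure M using fb_fin[OF assms(1)] .
  have "(\<Sum>B\<in>P. measure M B) = measure M (\<Union>B\<in>P. B)"
    by (rule finite_measure_finite_Union[symmetric])
       (use assms fb_sets disjoint_fam_id in auto)
  also have "\<dots> \<le> measure M UNIV"
    by (rule finite_measure_mono) (metis fb_space[OF assms(1)] sets.top subset_UNIV)+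
  finally show ?thesis .
qed

lemma var_bdd:
  assumes "is_smeasure \<mu>"
  shows "bdd_above {(\<Sum>B\<in>P. \<bar>sm \<mu> B\<bar>) | P. finite P \<and> P \<subseteq> sets borel \<and> disjoint P \<and> \<Union>P = A}"
proof (rule bdd_aboveI)
  fix s assume "s \<in> {(\<Sum>B\<in>P. \<bar>sm \<mu> B\<bar>) | P. finite P \<and> P \<subseteq> sets borel \<and> disjoint P \<and> \<Union>P = A}"
  then obtain P where P: "finite P" "P \<subseteq> sets borel" "disjoint P" and s: "s = (\<Sum>B\<in>P. \<bar>sm \<mu> B\<bar>)"
    by blast
  have "s \<le> (\<Sum>B\<in>P. measure (fst \<mu>) B + measure (snd \<mu>) B)"
    unfolding s sm_def by (rule sum_mono) (simp add: abs_le_iff)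
  also have "\<dots> = (\<Sum>B\<in>P. measure (fst \<mu>) B) + (\<Sum>B\<in>P. measure (snd \<mu>) B)"
    by (rule sum.distrib)
  also have "\<dots> \<le> measure (fst \<mu>) UNIV + measure (snd \<mu>) UNIV"
    using fb_sum_le[OF _ P, of "fst \<mu>"] fb_sum_le[OF _ P, of "snd \<mu>"] assms
    unfolding is_smeasure_def by linarith
  finally show "s \<le> measure (fst \<mu>) UNIV + measure (snd \<mu>) UNIV" .
qed

lemma var_upper:
  assumes "is_smeasure \<mu>" "finite Q" "Q \<subseteq> sets borel" "disjoint Q" "\<Union>Q = A"
  shows "(\<Sum>B\<in>Q. \<bar>sm \<mu> B\<bar>) \<le> var \<mu> A"
  unfolding var_def
  by (rule cSup_upper[OF _ var_bdd[OF assms(1)]]) (use assms in blast)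

lemma var_nonneg:
  assumes "is_smeasure \<mu>" "A \<in> sets borel"
  shows "0 \<le> var \<mu> A"
proof -
  have "(\<Sum>B\<in>{A}. \<bar>sm \<mu> B\<bar>) \<le> var \<mu> A"
    by (rule var_upper) (use assms in \<open>auto simp: disjoint_def\<close>)
  then show ?thesis by simp
qed



lemma quant_bound:
  assumes "is_smeasure \<mu>" "K \<in> sets borel" "h \<in> borel_measurable borel"
    "\<And>x. \<bar>h x\<bar> \<le> c" "\<And>x. x \<notin> K \<Longrightarrow> h x = 0" "m > (0::nat)"
    and var_upper: "\<And>Q. finite Q \<Longrightarrow> Q \<subseteq> sets borel \<Longrightarrow> disjoint Q \<Longrightarrow> \<Union>Q = K \<Longrightarrow> (\<Sum>B\<in>Q. \<bar>sm \<mu> B\<bar>) \<le> var \<mu> K"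
  shows "\<bar>sint \<mu> h\<bar> \<le> (c + 1/m) * var \<mu> K + (measure (fst \<mu>) UNIV + measure (snd \<mu>) UNIV) / m"
proof -
  define T where "T = measure (fst \<mu>) UNIV + measure (snd \<mu>) UNIV"
  define q where "q x = real_of_int \<lfloor>real m * h x\<rfloor> / real m" for x
  have mpos: "real m > 0" using assms(6) by simp
  have qm: "q \<in> borel_measurable borel" unfolding q_def using assms(3) by measurable
  have hq: "0 \<le> h x - q x \<and> h x - q x \<le> 1 / real m" for x
  proof -
    have "real_of_int \<lfloor>real m * h x\<rfloor> \<le> real m * h x" "real m * h x < real_of_int \<lfloor>real m * h x\<rfloor> + 1"
      by linarith+
    moreover have "h x - q x = (real m * h x - real_of_int \<lfloor>real m * h x\<rfloor>) / real m"
      unfolding q_def using mpos by (simp add: field_simps)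
    ultimately have e: "h x - q x = (real m * h x - real_of_int \<lfloor>real m * h x\<rfloor>) / real m"
      and a: "0 \<le> real m * h x - real_of_int \<lfloor>real m * h x\<rfloor>" "real m * h x - real_of_int \<lfloor>real m * h x\<rfloor> \<le> 1"
      by linarith+
    show ?thesis unfolding e using a mpos by (simp add: divide_right_mono)
  qed
  have bh: "bbf h" unfolding bbf_def using assms(3,4) by blast
  have bq: "bbf q" unfolding bbf_def
  proof (intro conjI exI allI)
    show "q \<in> borel_measurable borel" by (rule qm)
    fix x
    have "1 / real m \<le> 1" using assms(6) by simp
    then show "\<bar>q x\<bar> \<le> c + 1" unfolding abs_le_iff
      using hq[of x] abs_le_iff[THEN iffD1, OF assms(4)[of x]] by linarith
  qed
  have diff: "\<bar>sint \<mu> h - sint \<mu> q\<bar> \<le> T / m"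
  proof -
    have "\<bar>sint \<mu> (\<lambda>x. h x - q x)\<bar> \<le> (1 / m) * T"
      unfolding T_def
    proof (rule sint_bound[OF assms(1)])
      show "(\<lambda>x. h x - q x) \<in> borel_measurable borel" using assms(3) qm by (rule borel_measurable_diff)
      fix x show "\<bar>h x - q x\<bar> \<le> 1 / real m" unfolding abs_le_iff using hq[of x] by linarith
    qed
    then show ?thesis using sint_diff[OF assms(1) bh bq] by simp
  qed
  define N where "N = \<lceil>real m * c\<rceil> + 1"
  define J where "J = {-N..N}"
  define B where "B j = {x\<in>K. \<lfloor>real m * h x\<rfloor> = j}" for j
  have Bs: "B j \<in> sets borel" for j
  proof -
    have "{x. \<lfloor>real m * h x\<rfloor> = j} \<in> sets borel"
      using assms(3) by measurable
    moreover have "B j = K \<inter> {x. \<lfloor>real m * h x\<rfloor> = j}" unfolding B_def by auto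
    ultimately show ?thesis using assms(2) by simp
  qed
  have jbound: "\<bar>real_of_int j\<bar> \<le> real m * c + 1" if "x \<in> K" "\<lfloor>real m * h x\<rfloor> = j" for x j
  proof -
    have "\<bar>real m * h x\<bar> \<le> real m * c" using assms(4)[of x] mpos by (simp add: abs_mult)
    moreover have "real_of_int \<lfloor>real m * h x\<rfloor> \<le> real m * h x" "real m * h x < real_of_int \<lfloor>real m * h x\<rfloor> + 1"
      by linarith+
    ultimately show ?thesis using that by linarith
  qed
  have inJ: "j \<in> J" if "x \<in> K" "\<lfloor>real m * h x\<rfloor> = j" for x j
  proof -
    have "\<bar>real_of_int j\<bar> \<le> real m * c + 1" by (rule jbound[OF that])
    moreover have "real m * c \<le> real_of_int \<lceil>real m * c\<rceil>" by linarith
    ultimately have "\<bar>j\<bar> \<le> N" unfolding N_def by linarith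
    then show ?thesis unfolding J_def by auto
  qed
  have qsum: "q x = (\<Sum>j\<in>J. (real_of_int j / real m) * indicator (B j) x)" for x
  proof (cases "x \<in> K")
    case True
    define j0 where "j0 = \<lfloor>real m * h x\<rfloor>"
    have "j0 \<in> J" using inJ[OF True] j0_def by simp
    have "(\<Sum>j\<in>J. (real_of_int j / real m) * indicator (B j) x) = (\<Sum>j\<in>J. if j = j0 then real_of_int j0 / real m else 0)"
      by (rule sum.cong) (auto simp: B_def j0_def True indicator_def)
    also have "\<dots> = real_of_int j0 / real m" using \<open>j0 \<in> J\<close> unfolding J_def by simp
    finally show ?thesis unfolding q_def j0_def by simp
  next
    case False
    then show ?thesis unfolding q_def B_def using assms(5)[OF False] by (simp add: indicator_def)
  qed
  have "sint \<mu> q = sint \<mu> (\<lambda>x. \<Sum>j\<in>J. (real_of_int j / real m) * indicator (B j) x)"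
    using qsum by metis
  also have "\<dots> = (\<Sum>j\<in>J. sint \<mu> (\<lambda>x. (real_of_int j / real m) * indicator (B j) x))"
    by (rule sint_sum[OF assms(1)], simp add: J_def, rule bbf_cmult, rule bbf_indicator, rule Bs)
  also have "\<dots> = (\<Sum>j\<in>J. (real_of_int j / real m) * sm \<mu> (B j))"
    by (rule sum.cong[OF refl], subst sint_cmult, subst sint_indicator[OF assms(1) Bs], rule refl)
  finally have qint: "sint \<mu> q = (\<Sum>j\<in>J. (real_of_int j / real m) * sm \<mu> (B j))" .
  have "\<bar>sint \<mu> q\<bar> \<le> (\<Sum>j\<in>J. \<bar>(real_of_int j / real m) * sm \<mu> (B j)\<bar>)"
    unfolding qint by (rule sum_abs)
  also have "\<dots> \<le> (\<Sum>j\<in>J. (c + 1 / real m) * \<bar>sm \<mu> (B j)\<bar>)"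
  proof (rule sum_mono)
    fix j assume "j \<in> J"
    show "\<bar>(real_of_int j / real m) * sm \<mu> (B j)\<bar> \<le> (c + 1 / real m) * \<bar>sm \<mu> (B j)\<bar>"
    proof (cases "B j = {}")
      case True
      then show ?thesis by (simp add: sm_def)
    next
      case False
      then obtain x where "x \<in> K" "\<lfloor>real m * h x\<rfloor> = j" unfolding B_def by auto
      from jbound[OF this] mpos have "\<bar>real_of_int j / real m\<bar> \<le> c + 1 / real m"
        by (simp add: field_simps)
      then have "\<bar>real_of_int j / real m\<bar> * \<bar>sm \<mu> (B j)\<bar> \<le> (c + 1 / real m) * \<bar>sm \<mu> (B j)\<bar>"
        by (rule mult_right_mono) simp
      then show ?thesis by (simp only: abs_mult)
    qed
  qed
  also have "\<dots> = (c + 1 / real m) * (\<Sum>j\<in>J. \<bar>sm \<mu> (B j)\<bar>)"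
    by (simp add: sum_distrib_left)
  finally have S1: "\<bar>sint \<mu> q\<bar> \<le> (c + 1 / real m) * (\<Sum>j\<in>J. \<bar>sm \<mu> (B j)\<bar>)" .
  have "(\<Sum>j\<in>J. \<bar>sm \<mu> (B j)\<bar>) = (\<Sum>S\<in>B ` J. \<bar>sm \<mu> S\<bar>)"
  proof (rule sum.reindex_nontrivial[symmetric, unfolded o_def])
    show "finite J" unfolding J_def by simp
    fix i j assume "i \<in> J" "j \<in> J" "i \<noteq> j" "B i = B j"
    then have "B i = {}" unfolding B_def by auto
    then show "\<bar>sm \<mu> (B i)\<bar> = 0" by (simp add: sm_def)
  qed
  also have "\<dots> \<le> var \<mu> K"
  proof (rule var_upper)
    show "finite (B ` J)" unfolding J_def by simp
    show "B ` J \<subseteq> sets borel" using Bs by auto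
    show "disjoint (B ` J)" unfolding disjoint_def B_def by auto
    show "\<Union> (B ` J) = K"
    proof
      show "\<Union> (B ` J) \<subseteq> K" unfolding B_def by auto
      show "K \<subseteq> \<Union> (B ` J)"
      proof
        fix x assume "x \<in> K"
        then have "x \<in> B \<lfloor>real m * h x\<rfloor>" "\<lfloor>real m * h x\<rfloor> \<in> J" using inJ unfolding B_def by auto
        then show "x \<in> \<Union> (B ` J)" by blast
      qed
    qed
  qed
  finally have S2: "(\<Sum>j\<in>J. \<bar>sm \<mu> (B j)\<bar>) \<le> var \<mu> K" .
  have "0 \<le> c" using assms(4)[of 0] by linarith
  then have "0 \<le> c + 1 / real m" by simp
  from mult_left_mono[OF S2 this] S1
  have "\<bar>sint \<mu> q\<bar> \<le> (c + 1 / real m) * var \<mu> K" by linarith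
  then show ?thesis using diff unfolding T_def by linarith
qed


lemma sint_var_bound:
  assumes "is_smeasure \<mu>" "K \<in> sets borel" "h \<in> borel_measurable borel"
    "\<And>x. \<bar>h x\<bar> \<le> c" "\<And>x. x \<notin> K \<Longrightarrow> h x = 0"
  shows "\<bar>sint \<mu> h\<bar> \<le> c * var \<mu> K"
proof (rule ccontr)
  define T where "T = measure (fst \<mu>) UNIV + measure (snd \<mu>) UNIV"
  define V where "V = var \<mu> K"
  assume "\<not> \<bar>sint \<mu> h\<bar> \<le> c * var \<mu> K"
  then have gap: "0 < \<bar>sint \<mu> h\<bar> - c * V" unfolding V_def by linarith
  have V0: "0 \<le> V" unfolding V_def by (rule var_nonneg[OF assms(1,2)])
  have T0: "0 \<le> T" unfolding T_def by simp
  obtain n :: nat where n: "(V + T) / (\<bar>sint \<mu> h\<bar> - c * V) < real n"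
    using reals_Archimedean2 by blast
  define m where "m = Suc n"
  have mpos: "m > 0" "real m > 0" unfolding m_def by simp_all
  have "(V + T) / (\<bar>sint \<mu> h\<bar> - c * V) < real m" using n unfolding m_def by simp
  then have "V + T < real m * (\<bar>sint \<mu> h\<bar> - c * V)" using gap by (simp add: divide_less_eq mult.commute)
  then have lt: "(V + T) / real m < \<bar>sint \<mu> h\<bar> - c * V" using mpos by (simp add: divide_less_eq mult.commute)
  have "\<bar>sint \<mu> h\<bar> \<le> (c + 1/m) * var \<mu> K + (measure (fst \<mu>) UNIV + measure (snd \<mu>) UNIV) / m"
    apply (rule quant_bound[OF assms mpos(1)])
     apply assumption
    by (rule var_upper[OF assms(1)])
  also have "\<dots> = c * V + (V + T) / real m" unfolding V_def T_def by (simp add: distrib_right add_divide_distrib)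
  finally show False using lt by linarith
qed




lemma cont_exists:
  assumes "is_smeasure \<mu>" "u < v"
  shows "\<exists>x. u < x \<and> x < v \<and> cont_point \<mu> x"
proof -
  define C where "C = {x. measure (fst \<mu>) {x} \<noteq> 0} \<union> {x. measure (snd \<mu>) {x} \<noteq> 0}"
  have "countable {x. measure (fst \<mu>) {x} \<noteq> 0}"
    using assms(1) fb_fin finite_measure.countable_support unfolding is_smeasure_def by blast
  moreover have "countable {x. measure (snd \<mu>) {x} \<noteq> 0}"
    using assms(1) fb_fin finite_measure.countable_support unfolding is_smeasure_def by blast
  ultimately have cC: "countable C" unfolding C_def by simp
  have "\<not> {u<..<v} \<subseteq> C"
  proof
    assume "{u<..<v} \<subseteq> C"
    then have "countable {u<..<v}" using cC countable_subset by blast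
    then show False using uncountable_open_interval[of u v] assms(2) by simp
  qed
  then obtain x where "x \<in> {u<..<v}" "x \<notin> C" by blast
  then show ?thesis unfolding C_def cont_point_def sm_def by auto
qed

lemma sm_le_var:
  assumes "is_smeasure \<mu>" "A \<in> sets borel" "B \<in> sets borel" "B \<subseteq> A"
  shows "\<bar>sm \<mu> B\<bar> \<le> var \<mu> A"
proof -
  have "\<bar>sint \<mu> (indicator B)\<bar> \<le> 1 * var \<mu> A"
  proof (rule sint_var_bound[OF assms(1,2)])
    show "indicator B \<in> borel_measurable borel" using assms(3) by simp
    fix x show "\<bar>indicator B x :: real\<bar> \<le> 1" by (simp add: indicator_def)
  next
    fix x assume "x \<notin> A" then show "indicator B x = (0::real)" using assms(4) by (auto simp: indicator_def)
  qed
  then show ?thesis using sint_indicator[OF assms(1,3)] by simp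
qed

lemma eventually_small:
  assumes "0 < d1" "0 < \<delta>"
  shows "eventually (\<lambda>k. d1 / (real k + 2) < \<delta>) sequentially"
proof -
  obtain n :: nat where n: "d1 / \<delta> < real n" using reals_Archimedean2 by blast
  show ?thesis
  proof (rule eventually_sequentiallyI[of n])
    fix k assume "n \<le> k"
    then have "d1 / \<delta> < real k + 2" using n by linarith
    then have "d1 < \<delta> * (real k + 2)" using assms by (simp add: divide_less_eq mult.commute)
    then show "d1 / (real k + 2) < \<delta>" by (simp add: divide_less_eq mult.commute)
  qed
qed

lemma fb_tail_bot:
  assumes "finite_borel M" "0 < e"
  shows "\<exists>R. \<forall>c\<le>R. measure M {..c} < e"
proof -
  interpret finite_measure M using fb_fin[OF assms(1)] .
  have "(\<lambda>k. measure M {..- real k}) \<longlonglongrightarrow> measure M (\<Inter>k. {..- real k})"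
    by (rule finite_Lim_measure_decseq) (auto simp: fb_sets[OF assms(1)] decseq_def)
  moreover have "(\<Inter>k. {..- real k}) = {}"
  proof -
    have "x \<notin> (\<Inter>k. {..- real k})" for x
    proof -
      obtain n :: nat where "- x < real n" using reals_Archimedean2 by blast
      then have "\<not> x \<le> - real n" by linarith
      then show ?thesis by blast
    qed
    then show ?thesis by blast
  qed
  ultimately have "(\<lambda>k. measure M {..- real k}) \<longlonglongrightarrow> 0" by simp
  then have "eventually (\<lambda>k. measure M {..- real k} < e) sequentially"
    using assms(2) by (rule order_tendstoD(2))
  then obtain k where k: "measure M {..- real k} < e" using eventually_sequentially by auto
  have "measure M {..c} < e" if "c \<le> - real k" for c
  proof -
    have "measure M {..c} \<le> measure M {..- real k}"
      by (rule finite_measure_mono) (use that fb_sets[OF assms(1)] in auto)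
    then show ?thesis using k by linarith
  qed
  then show ?thesis by blast
qed

lemma fb_tail_top:
  assumes "finite_borel M" "0 < e"
  shows "\<exists>R. \<forall>c\<ge>R. measure M {c<..} < e"
proof -
  interpret finite_measure M using fb_fin[OF assms(1)] .
  have "(\<lambda>k. measure M {real k<..}) \<longlonglongrightarrow> measure M (\<Inter>k. {real k<..})"
    by (rule finite_Lim_measure_decseq) (auto simp: fb_sets[OF assms(1)] decseq_def)
  moreover have "(\<Inter>k. {real k<..}) = {}"
  proof -
    have "x \<notin> (\<Inter>k. {real k<..})" for x
    proof -
      obtain n :: nat where "x < real n" using reals_Archimedean2 by blast
      then have "\<not> real n < x" by linarith
      then show ?thesis by blast
    qed
    then show ?thesis by blast
  qed
  ultimately have "(\<lambda>k. measure M {real k<..}) \<longlonglongrightarrow> 0" by simp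
  then have "eventually (\<lambda>k. measure M {real k<..} < e) sequentially"
    using assms(2) by (rule order_tendstoD(2))
  then obtain k where k: "measure M {real k<..} < e" using eventually_sequentially by auto
  have "measure M {c<..} < e" if "c \<ge> real k" for c
  proof -
    have "measure M {c<..} \<le> measure M {real k<..}"
      by (rule finite_measure_mono) (use that fb_sets[OF assms(1)] in auto)
    then show ?thesis using k by linarith
  qed
  then show ?thesis by blast
qed

lemma abs_diff_small: "0 \<le> p \<Longrightarrow> p < e \<Longrightarrow> 0 \<le> q \<Longrightarrow> q < e \<Longrightarrow> \<bar>p - q\<bar> < (e::real)"
  by (auto simp: abs_less_iff)

lemma sm_tail_bot:
  assumes "is_smeasure \<mu>" "0 < e"
  shows "\<exists>R. \<forall>c\<le>R. \<bar>sm \<mu> {..c}\<bar> < e"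
proof -
  obtain R1 where R1: "\<forall>c\<le>R1. measure (fst \<mu>) {..c} < e"
    using fb_tail_bot assms unfolding is_smeasure_def by blast
  obtain R2 where R2: "\<forall>c\<le>R2. measure (snd \<mu>) {..c} < e"
    using fb_tail_bot assms unfolding is_smeasure_def by blast
  have "\<bar>sm \<mu> {..c}\<bar> < e" if "c \<le> min R1 R2" for c
    unfolding sm_def by (rule abs_diff_small[OF measure_nonneg R1[rule_format] measure_nonneg R2[rule_format]]) (use that in auto)
  then show ?thesis by blast
qed

lemma sm_tail_top:
  assumes "is_smeasure \<mu>" "0 < e"
  shows "\<exists>R. \<forall>c\<ge>R. \<bar>sm \<mu> {c<..}\<bar> < e"
proof -
  obtain R1 where R1: "\<forall>c\<ge>R1. measure (fst \<mu>) {c<..} < e"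
    using fb_tail_top assms unfolding is_smeasure_def by blast
  obtain R2 where R2: "\<forall>c\<ge>R2. measure (snd \<mu>) {c<..} < e"
    using fb_tail_top assms unfolding is_smeasure_def by blast
  have "\<bar>sm \<mu> {c<..}\<bar> < e" if "c \<ge> max R1 R2" for c
    unfolding sm_def by (rule abs_diff_small[OF measure_nonneg R1[rule_format] measure_nonneg R2[rule_format]]) (use that in auto)
  then show ?thesis by blast
qed

lemma fb_dom:
  assumes "finite_borel M" "f \<in> borel_measurable borel" "\<And>i. s i \<in> borel_measurable borel"
    "\<And>x. (\<lambda>i. s i x) \<longlonglongrightarrow> (f x :: real)" "\<And>i x. \<bar>s i x\<bar> \<le> 1"
  shows "(\<lambda>i. integral\<^sup>L M (s i)) \<longlonglongrightarrow> integral\<^sup>L M f"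
proof (rule integral_dominated_convergence[where w="\<lambda>x. 1"])
  interpret finite_measure M using fb_fin[OF assms(1)] .
  show "f \<in> borel_measurable M" by (rule fb_meas[OF assms(1,2)])
  show "s i \<in> borel_measurable M" for i by (rule fb_meas[OF assms(1,3)])
  show "integrable M (\<lambda>x. 1::real)" by simp
  show "AE x in M. (\<lambda>i. s i x) \<longlonglongrightarrow> f x" using assms(4) by simp
  show "AE x in M. norm (s i x) \<le> 1" for i using assms(5) by simp
qed

lemma sint_dom:
  assumes "is_smeasure \<mu>" "f \<in> borel_measurable borel" "\<And>i. s i \<in> borel_measurable borel"
    "\<And>x. (\<lambda>i. s i x) \<longlonglongrightarrow> (f x :: real)" "\<And>i x. \<bar>s i x\<bar> \<le> 1"
  shows "(\<lambda>i. sint \<mu> (s i)) \<longlonglongrightarrow> sint \<mu> f"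
  unfolding sint_def
  by (rule tendsto_diff; rule fb_dom[OF _ assms(2-5)]) (use assms(1) in \<open>simp_all add: is_smeasure_def\<close>)




definition phi :: "real \<Rightarrow> real \<Rightarrow> real \<Rightarrow> real \<Rightarrow> real" where
  "phi a b d x = max 0 (min 1 (min ((x - a + d) / (2*d)) ((b + d - x) / (2*d))))"

lemma phi_bound: "0 \<le> phi a b d x" "phi a b d x \<le> 1" "\<bar>phi a b d x\<bar> \<le> 1"
  unfolding phi_def by auto

lemma phi_low: assumes "0 < d" "x \<le> a - d" shows "phi a b d x = 0"
proof -
  have "(x - a + d) / (2*d) \<le> 0" using assms by (simp add: divide_nonpos_pos)
  then show ?thesis unfolding phi_def by simp
qed

lemma phi_high: assumes "0 < d" "b + d \<le> x" shows "phi a b d x = 0"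
proof -
  have "(b + d - x) / (2*d) \<le> 0" using assms by (simp add: divide_nonpos_pos)
  then show ?thesis unfolding phi_def by simp
qed

lemma phi_one: assumes "0 < d" "a + d \<le> x" "x \<le> b - d" shows "phi a b d x = 1"
proof -
  have "1 \<le> (x - a + d) / (2*d)" using assms by (simp add: le_divide_eq)
  moreover have "1 \<le> (b + d - x) / (2*d)" using assms by (simp add: le_divide_eq)
  ultimately show ?thesis unfolding phi_def by simp
qed

lemma phi_a: assumes "0 < d" "a + d < b - d" shows "phi a b d a = 1/2"
proof -
  have "(a - a + d) / (2*d) = 1/2" using assms by simp
  moreover have "1 \<le> (b + d - a) / (2*d)" using assms by (simp add: le_divide_eq)
  ultimately show ?thesis unfolding phi_def by simp
qed

lemma phi_b: assumes "0 < d" "a + d < b - d" shows "phi a b d b = 1/2"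
proof -
  have "(b + d - b) / (2*d) = 1/2" using assms by simp
  moreover have "1 \<le> (b - a + d) / (2*d)" using assms by (simp add: le_divide_eq)
  ultimately show ?thesis unfolding phi_def by (simp add: algebra_simps)
qed

lemma phi_cont: "continuous_on UNIV (phi a b d)"
proof -
  have eq: "phi a b d = (\<lambda>x. max 0 (min 1 (min ((x - a + d) * inverse (2*d)) ((b + d - x) * inverse (2*d)))))"
    unfolding phi_def[abs_def] divide_inverse by (rule refl)
  have l1: "continuous_on UNIV (\<lambda>x. (x - a + d) * inverse (2*d))"
    by (intro continuous_on_mult_right continuous_on_add continuous_on_diff continuous_on_id continuous_on_const)
  have l2: "continuous_on UNIV (\<lambda>x. (b + d - x) * inverse (2*d))"
    by (intro continuous_on_mult_right continuous_on_add continuous_on_diff continuous_on_id continuous_on_const)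
  show ?thesis unfolding eq
    by (rule continuous_on_max[OF continuous_on_const continuous_on_min[OF continuous_on_const continuous_on_min[OF l1 l2]]])
qed

lemma phi_meas: "phi a b d \<in> borel_measurable borel"
  by (rule borel_measurable_continuous_onI[OF phi_cont])


definition gab :: "real \<Rightarrow> real \<Rightarrow> real \<Rightarrow> real" where
  "gab a b x = indicator {a<..b} x + 1/2 * indicator {a} x - 1/2 * indicator {b} x"

lemma phi_lim:
  assumes "0 < d1" "a + d1 < b - d1"
  shows "(\<lambda>k. phi a b (d1 / (real k + 2)) x) \<longlonglongrightarrow> gab a b x"
proof -
  define dk where "dk k = d1 / (real k + 2)" for k :: nat
  have dpos: "0 < dk k" for k unfolding dk_def using assms(1) by simp
  have dlt: "dk k < d1" for k
  proof -
    have "d1 / (real k + 2) < d1 / 1" using assms(1) by (intro divide_strict_left_mono) auto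
    then show ?thesis unfolding dk_def by simp
  qed
  have dab: "a + dk k < b - dk k" for k using dlt[of k] assms(2) by linarith
  have ab: "a < b" using assms by linarith
  have ev: "eventually (\<lambda>k. dk k < \<delta>) sequentially" if "0 < \<delta>" for \<delta>
    unfolding dk_def by (rule eventually_small[OF assms(1) that])
  have "eventually (\<lambda>k. phi a b (dk k) x = gab a b x) sequentially"
  proof (cases "x < a")
    case True
    show ?thesis
    proof (rule eventually_mono[OF ev[of "a - x"]])
      fix k assume "dk k < a - x"
      then have "phi a b (dk k) x = 0" using dpos[of k] by (intro phi_low) auto
      then show "phi a b (dk k) x = gab a b x" using True ab unfolding gab_def by auto
    qed (use True in simp)
  next
    case F1: False
    show ?thesis
    proof (cases "x = a")
      case True
      show ?thesis unfolding True
        by (rule always_eventually) (use phi_a[OF dpos dab] ab in \<open>auto simp: gab_def\<close>)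
    next
      case F2: False
      show ?thesis
      proof (cases "x < b")
        case True
        have "a < x" using F1 F2 by linarith
        show ?thesis
        proof (rule eventually_mono[OF ev[of "min (x - a) (b - x)"]])
          fix k assume "dk k < min (x - a) (b - x)"
          then have "phi a b (dk k) x = 1" using dpos[of k] by (intro phi_one) auto
          then show "phi a b (dk k) x = gab a b x" using True \<open>a < x\<close> unfolding gab_def by auto
        qed (use True \<open>a < x\<close> in simp)
      next
        case F3: False
        show ?thesis
        proof (cases "x = b")
          case True
          show ?thesis unfolding True
            by (rule always_eventually) (use phi_b[OF dpos dab] ab in \<open>auto simp: gab_def\<close>)
        next
          case False
          then have "b < x" using F3 by linarith
          show ?thesis
          proof (rule eventually_mono[OF ev[of "x - b"]])
            fix k assume "dk k < x - b"
            then have "phi a b (dk k) x = 0" using dpos[of k] by (intro phi_high) auto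
            then show "phi a b (dk k) x = gab a b x" using \<open>b < x\<close> ab unfolding gab_def by auto
          qed (use \<open>b < x\<close> in simp)
        qed
      qed
    qed
  qed
  then show ?thesis unfolding dk_def by (rule tendsto_eventually)
qed


lemma gab_meas: "gab a b \<in> borel_measurable borel"
  unfolding gab_def[abs_def] by measurable

lemma sint_gab:
  assumes "is_smeasure \<mu>" "cont_point \<mu> a" "cont_point \<mu> b"
  shows "sint \<mu> (gab a b) = sm \<mu> {a<..b}"
proof -
  have b1: "bbf (\<lambda>x. indicator {a<..b} x + 1/2 * indicator {a} x)"
    by (intro bbf_add bbf_cmult bbf_indicator) auto
  have b2: "bbf (\<lambda>x. 1/2 * indicator {b} x)"
    by (intro bbf_cmult bbf_indicator) auto
  have "sint \<mu> (gab a b) = sint \<mu> (\<lambda>x. (indicator {a<..b} x + 1/2 * indicator {a} x) - 1/2 * indicator {b} x)"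
    unfolding gab_def[abs_def] by (rule refl)
  also have "\<dots> = sint \<mu> (\<lambda>x. indicator {a<..b} x + 1/2 * indicator {a} x) - sint \<mu> (\<lambda>x. 1/2 * indicator {b} x)"
    by (rule sint_diff[OF assms(1) b1 b2])
  also have "sint \<mu> (\<lambda>x. indicator {a<..b} x + 1/2 * indicator {a} x) = sint \<mu> (indicator {a<..b}) + sint \<mu> (\<lambda>x. 1/2 * indicator {a} x)"
    by (rule sint_add[OF assms(1)]) (intro bbf_cmult bbf_indicator; simp)+
  also have "\<dots> = sm \<mu> {a<..b}"
    using assms unfolding sint_cmult by (simp add: sint_indicator cont_point_def)
  also have "sint \<mu> (\<lambda>x. 1/2 * indicator {b} x) = 0"
    using assms unfolding sint_cmult by (simp add: sint_indicator cont_point_def)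
  finally show ?thesis by simp
qed

lemma dk_props: "0 < d1 \<Longrightarrow> 0 < d1 / (real k + 2) \<and> d1 / (real k + 2) < d1"
proof -
  assume d1: "0 < d1"
  have "d1 / (real k + 2) < d1 / 1" using d1 by (intro divide_strict_left_mono) auto
  then show ?thesis using d1 by simp
qed

lemma sint_phi_lim:
  assumes "is_smeasure \<mu>" "cont_point \<mu> a" "cont_point \<mu> b" "0 < d1" "a + d1 < b - d1"
  shows "(\<lambda>k. sint \<mu> (phi a b (d1 / (real k + 2)))) \<longlonglongrightarrow> sm \<mu> {a<..b}"
proof -
  have "(\<lambda>k. sint \<mu> (phi a b (d1 / (real k + 2)))) \<longlonglongrightarrow> sint \<mu> (gab a b)"
    by (rule sint_dom[OF assms(1) gab_meas phi_meas phi_lim[OF assms(4,5)] phi_bound(3)])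
  then show ?thesis using sint_gab[OF assms(1-3)] by simp
qed

lemma phi_var_bound:
  assumes "is_smeasure \<nu>" "0 < d" "a + d < b - d" "ball a d \<subseteq> Na" "ball b d \<subseteq> Nb"
    "Na \<in> sets borel" "Nb \<in> sets borel"
  shows "\<bar>sint \<nu> (phi a b d) - sm \<nu> {a<..b}\<bar> \<le> var \<nu> Na + var \<nu> Nb"
proof -
  define m where "m = (a + b) / 2"
  have m1: "m < b - d" unfolding m_def using assms(3) by (simp add: field_simps)
  have m2: "a + d < m" unfolding m_def using assms(3) by (simp add: field_simps)
  define D where "D x = phi a b d x - indicator {a<..b} x" for x
  define ha where "ha x = indicator {..<m} x * D x" for x
  define hb where "hb x = indicator {m..} x * D x" for x
  have Dm: "D \<in> borel_measurable borel" unfolding D_def[abs_def]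
    by (intro borel_measurable_diff phi_meas borel_measurable_indicator) simp
  have Db: "\<bar>D x\<bar> \<le> 1" for x
    using phi_bound[of a b d x] unfolding D_def by (auto simp: indicator_def)
  have ham: "ha \<in> borel_measurable borel" unfolding ha_def[abs_def]
    by (intro borel_measurable_times borel_measurable_indicator Dm) simp
  have hbm: "hb \<in> borel_measurable borel" unfolding hb_def[abs_def]
    by (intro borel_measurable_times borel_measurable_indicator Dm) simp
  have hab: "\<bar>ha x\<bar> \<le> 1" "\<bar>hb x\<bar> \<le> 1" for x
    using Db[of x] unfolding ha_def hb_def by (auto simp: indicator_def)
  have bha: "bbf ha" "bbf hb" "bbf (phi a b d)" "bbf (indicator {a<..b})"
    unfolding bbf_def using ham hbm hab phi_meas phi_bound(3) by (blast, blast, blast, auto simp: indicator_def intro!: exI[of _ 1])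
  have split: "D x = ha x + hb x" for x unfolding ha_def hb_def by (auto simp: indicator_def)
  have "sint \<nu> (phi a b d) - sm \<nu> {a<..b} = sint \<nu> D"
    unfolding D_def[abs_def] using sint_diff[OF assms(1) bha(3,4)] sint_indicator[OF assms(1)] by simp
  also have "\<dots> = sint \<nu> (\<lambda>x. ha x + hb x)" using split by metis
  also have "\<dots> = sint \<nu> ha + sint \<nu> hb" by (rule sint_add[OF assms(1) bha(1,2)])
  finally have eq: "sint \<nu> (phi a b d) - sm \<nu> {a<..b} = sint \<nu> ha + sint \<nu> hb" .
  have "\<bar>sint \<nu> ha\<bar> \<le> 1 * var \<nu> Na"
  proof (rule sint_var_bound[OF assms(1) assms(6) ham hab(1)])
    fix x assume "x \<notin> Na"
    then have "x \<notin> ball a d" using assms(4) by blast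
    then have "x \<le> a - d \<or> a + d \<le> x" by (auto simp: dist_real_def)
    then show "ha x = 0"
    proof
      assume "x \<le> a - d"
      then show ?thesis using phi_low[OF assms(2)] assms(2) unfolding ha_def D_def by (auto simp: indicator_def)
    next
      assume "a + d \<le> x"
      show ?thesis
      proof (cases "x < m")
        case True
        have "x \<le> b - d" using True assms(2,3) \<open>a + d \<le> x\<close> m1 m2 by linarith
        have "a < x" using True assms(2,3) \<open>a + d \<le> x\<close> m1 m2 by linarith
        have "x \<le> b" using True assms(2,3) \<open>a + d \<le> x\<close> m1 m2 by linarith
        note this \<open>a < x\<close> \<open>x \<le> b - d\<close>
        then show ?thesis using phi_one[OF assms(2) \<open>a + d \<le> x\<close>] unfolding ha_def D_def by (auto simp: indicator_def)
      next
        case False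
        then show ?thesis unfolding ha_def by (auto simp: indicator_def)
      qed
    qed
  qed
  moreover have "\<bar>sint \<nu> hb\<bar> \<le> 1 * var \<nu> Nb"
  proof (rule sint_var_bound[OF assms(1) assms(7) hbm hab(2)])
    fix x assume "x \<notin> Nb"
    then have "x \<notin> ball b d" using assms(5) by blast
    then have "x \<le> b - d \<or> b + d \<le> x" by (auto simp: dist_real_def)
    then show "hb x = 0"
    proof
      assume "b + d \<le> x"
      then show ?thesis using phi_high[OF assms(2)] assms(2) unfolding hb_def D_def by (auto simp: indicator_def)
    next
      assume "x \<le> b - d"
      show ?thesis
      proof (cases "m \<le> x")
        case True
        have "a + d \<le> x" using True assms(2,3) \<open>x \<le> b - d\<close> m1 m2 by linarith
        have "a < x" using True assms(2,3) \<open>x \<le> b - d\<close> m1 m2 by linarith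
        have "x \<le> b" using True assms(2,3) \<open>x \<le> b - d\<close> m1 m2 by linarith
        note this \<open>a < x\<close> \<open>a + d \<le> x\<close>
        then show ?thesis using phi_one[OF assms(2) \<open>a + d \<le> x\<close> \<open>x \<le> b - d\<close>] unfolding hb_def D_def by (auto simp: indicator_def)
      next
        case False
        then show ?thesis unfolding hb_def by (auto simp: indicator_def)
      qed
    qed
  qed
  ultimately show ?thesis unfolding eq by linarith
qed




lemma limsup_ev:
  assumes "limsup (\<lambda>n. ereal (f n)) \<le> ereal \<epsilon>" "\<epsilon> < e"
  shows "eventually (\<lambda>n. f n < e) sequentially"
proof -
  have "ereal \<epsilon> < ereal e" using assms(2) by simp
  then have "limsup (\<lambda>n. ereal (f n)) < ereal e" by (rule order.strict_trans1[OF assms(1)])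
  then have "eventually (\<lambda>n. ereal (f n) < ereal e) sequentially" by (rule Limsup_lessD)
  then show ?thesis by (rule eventually_mono) simp
qed

lemma interval_conv:
  assumes ms: "\<And>n. is_smeasure (\<mu>s n)" and m: "is_smeasure \<mu>" and vc: "vague_conv \<mu>s \<mu>"
    and ca: "cont_point \<mu> a" and cb: "cont_point \<mu> b" and ab: "a < b"
    and na: "no_mass_at \<mu>s a" and nb: "no_mass_at \<mu>s b"
  shows "(\<lambda>n. sm (\<mu>s n) {a<..b}) \<longlonglongrightarrow> sm \<mu> {a<..b}"
  unfolding tendsto_iff dist_real_def
proof (intro allI impI)
  fix r :: real assume r: "0 < r"
  define \<epsilon> where "\<epsilon> = r / 8"
  have \<epsilon>: "0 < \<epsilon>" unfolding \<epsilon>_def using r by simp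
  obtain Na where Na: "open Na" "a \<in> Na" "limsup (\<lambda>n. ereal (var (\<mu>s n) Na)) \<le> ereal \<epsilon>"
    using na \<epsilon> unfolding no_mass_at_def by blast
  obtain Nb where Nb: "open Nb" "b \<in> Nb" "limsup (\<lambda>n. ereal (var (\<mu>s n) Nb)) \<le> ereal \<epsilon>"
    using nb \<epsilon> unfolding no_mass_at_def by blast
  have evA: "eventually (\<lambda>n. var (\<mu>s n) Na < 2 * \<epsilon>) sequentially"
    by (rule limsup_ev[OF Na(3)]) (use \<epsilon> in simp)
  have evB: "eventually (\<lambda>n. var (\<mu>s n) Nb < 2 * \<epsilon>) sequentially"
    by (rule limsup_ev[OF Nb(3)]) (use \<epsilon> in simp)
  obtain da where da: "0 < da" "ball a da \<subseteq> Na" using Na(1,2) open_contains_ball by blast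
  obtain db where db: "0 < db" "ball b db \<subseteq> Nb" using Nb(1,2) open_contains_ball by blast
  define d1 where "d1 = min (min da db) ((b - a) / 3)"
  have d1a: "0 < d1" unfolding d1_def using da db ab by simp
  have d1b: "d1 \<le> da" unfolding d1_def by (simp add: min.coboundedI1)
  have d1c: "d1 \<le> db" unfolding d1_def by (simp add: min.coboundedI1 min.coboundedI2)
  have d1d: "d1 \<le> (b - a) / 3" unfolding d1_def by (rule min.cobounded2)
  note d1 = d1a d1b d1c d1d
  have d1ab: "a + d1 < b - d1" using d1(4) ab by (simp add: field_simps)
  have "eventually (\<lambda>k. \<bar>sint \<mu> (phi a b (d1 / (real k + 2))) - sm \<mu> {a<..b}\<bar> < 2 * \<epsilon>) sequentially"
    using sint_phi_lim[OF m ca cb d1(1) d1ab] \<epsilon> unfolding tendsto_iff dist_real_def by simp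
  then obtain k where k: "\<bar>sint \<mu> (phi a b (d1 / (real k + 2))) - sm \<mu> {a<..b}\<bar> < 2 * \<epsilon>"
    using eventually_sequentially by auto
  define d where "d = d1 / (real k + 2)"
  have d: "0 < d" "d < d1" using dk_props[OF d1(1), of k] unfolding d_def by auto
  have dab: "a + d < b - d" using d d1ab by linarith
  have "d \<le> da" using d d1 by linarith
  then have "ball a d \<subseteq> ball a da" by (rule subset_ball)
  then have ballA: "ball a d \<subseteq> Na" using da(2) by (rule order_trans)
  have "d \<le> db" using d d1 by linarith
  then have "ball b d \<subseteq> ball b db" by (rule subset_ball)
  then have ballB: "ball b d \<subseteq> Nb" using db(2) by (rule order_trans)
  have k': "\<bar>sint \<mu> (phi a b d) - sm \<mu> {a<..b}\<bar> < 2 * \<epsilon>" using k unfolding d_def .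
  have supp: "\<forall>x. x \<notin> {a - d..b + d} \<longrightarrow> phi a b d x = 0"
  proof (intro allI impI)
    fix x assume "x \<notin> {a - d..b + d}"
    then have "x \<le> a - d \<or> b + d \<le> x" by auto
    then show "phi a b d x = 0" using phi_low[OF d(1)] phi_high[OF d(1)] by blast
  qed
  have "continuous_on UNIV (phi a b d) \<and> (\<exists>K. compact K \<and> (\<forall>x. x \<notin> K \<longrightarrow> phi a b d x = 0))"
    using phi_cont supp compact_Icc by blast
  then have "(\<lambda>n. sint (\<mu>s n) (phi a b d)) \<longlonglongrightarrow> sint \<mu> (phi a b d)"
    by (rule vc[unfolded vague_conv_def, rule_format])
  then have evV: "eventually (\<lambda>n. \<bar>sint (\<mu>s n) (phi a b d) - sint \<mu> (phi a b d)\<bar> < 2 * \<epsilon>) sequentially"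
    using \<epsilon> unfolding tendsto_iff dist_real_def by simp
  show "eventually (\<lambda>n. \<bar>sm (\<mu>s n) {a<..b} - sm \<mu> {a<..b}\<bar> < r) sequentially"
  proof (rule eventually_mono[OF eventually_conj[OF evA eventually_conj[OF evB evV]]])
    fix n assume H: "var (\<mu>s n) Na < 2 * \<epsilon> \<and> var (\<mu>s n) Nb < 2 * \<epsilon> \<and>
        \<bar>sint (\<mu>s n) (phi a b d) - sint \<mu> (phi a b d)\<bar> < 2 * \<epsilon>"
    have "\<bar>sint (\<mu>s n) (phi a b d) - sm (\<mu>s n) {a<..b}\<bar> \<le> var (\<mu>s n) Na + var (\<mu>s n) Nb"
      by (rule phi_var_bound[OF ms d(1) dab ballA ballB]) (use Na(1) Nb(1) in auto)
    then show "\<bar>sm (\<mu>s n) {a<..b} - sm \<mu> {a<..b}\<bar> < r"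
      using H k' unfolding \<epsilon>_def by linarith
  qed
qed




lemma part_mono:
  assumes "\<forall>i<m. tt i < (tt (Suc i) :: real)" "i \<le> k" "k \<le> m"
  shows "tt i \<le> tt k"
  using assms(2,3)
proof (induction k)
  case 0 then show ?case by simp
next
  case (Suc k)
  show ?case
  proof (cases "i = Suc k")
    case True then show ?thesis by simp
  next
    case False
    then have "i \<le> k" "k < m" using Suc.prems by auto
    then have "tt i \<le> tt k" using Suc.IH by simp
    also have "tt k < tt (Suc k)" using assms(1) \<open>k < m\<close> by blast
    finally show ?thesis by simp
  qed
qed

lemma part_find:
  assumes "\<forall>i<m. tt i < (tt (Suc i) :: real)" "tt 0 < x" "x \<le> tt m"
  shows "\<exists>j\<in>{1..m}. tt (j - 1) < x \<and> x \<le> tt j"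
  using assms
proof (induction m)
  case 0 then show ?case by simp
next
  case (Suc m)
  show ?case
  proof (cases "x \<le> tt m")
    case True
    then obtain j where "j \<in> {1..m}" "tt (j - 1) < x \<and> x \<le> tt j" using Suc by auto
    then show ?thesis by (intro bexI[of _ j]) auto
  next
    case False
    then show ?thesis using Suc.prems by (intro bexI[of _ "Suc m"]) auto
  qed
qed

lemma part_unique:
  assumes "\<forall>i<m. tt i < (tt (Suc i) :: real)" "i \<in> {1..m}" "j \<in> {1..m}"
    "tt (i - 1) < x" "x \<le> tt i" "tt (j - 1) < x" "x \<le> tt j"
  shows "i = j"
proof (rule ccontr)
  assume "i \<noteq> j"
  then consider "i < j" | "j < i" by linarith
  then show False
  proof cases
    case 1
    then have "tt i \<le> tt (j - 1)" using assms by (intro part_mono[OF assms(1)]) auto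
    then show False using assms by linarith
  next
    case 2
    then have "tt j \<le> tt (i - 1)" using assms by (intro part_mono[OF assms(1)]) auto
    then show False using assms by linarith
  qed
qed

lemma partition_exists:
  assumes "is_smeasure \<mu>" "a < b" "0 < \<delta>" "cont_point \<mu> a" "cont_point \<mu> b"
  shows "\<exists>m tt. m > 0 \<and> tt 0 = a \<and> tt m = b \<and> (\<forall>i\<le>m. cont_point \<mu> (tt i))
     \<and> (\<forall>i<m. tt i < tt (Suc i) \<and> tt (Suc i) - tt i < \<delta>)"
proof -
  obtain m :: nat where m: "2 * (b - a) / \<delta> < real m" using reals_Archimedean2 by blast
  have "0 < 2 * (b - a) / \<delta>" using assms by simp
  then have mpos: "0 < m" using m by linarith
  define h where "h = (b - a) / real m"
  have hpos: "0 < h" unfolding h_def using assms mpos by simp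
  have "2 * (b - a) < real m * \<delta>" using m assms(3) by (simp add: divide_less_eq mult.commute)
  then have hd: "h < \<delta> / 2" unfolding h_def using mpos by (simp add: divide_less_eq field_simps)
  have mh: "a + real m * h = b" unfolding h_def using mpos by simp
  have "\<forall>i. \<exists>t. 0 < i \<and> i < m \<longrightarrow> a + real i * h - h / 4 < t \<and> t < a + real i * h \<and> cont_point \<mu> t"
  proof
    fix i
    have "a + real i * h - h / 4 < a + real i * h" using hpos by simp
    from cont_exists[OF assms(1) this] show "\<exists>t. 0 < i \<and> i < m \<longrightarrow> a + real i * h - h / 4 < t \<and> t < a + real i * h \<and> cont_point \<mu> t"
      by blast
  qed
  then obtain t where t: "\<And>i. 0 < i \<Longrightarrow> i < m \<Longrightarrow> a + real i * h - h / 4 < t i \<and> t i < a + real i * h \<and> cont_point \<mu> (t i)"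
    by (metis (full_types) choice)
  define tt where "tt i = (if i = 0 then a else if i = m then b else t i)" for i
  have lo: "a + real i * h - h / 4 \<le> tt i" if "i \<le> m" for i
    using t[of i] that hpos mh unfolding tt_def by (cases "i = 0"; cases "i = m") auto
  have hi: "tt i \<le> a + real i * h" if "i \<le> m" for i
    using t[of i] that hpos mh unfolding tt_def by (cases "i = 0"; cases "i = m") auto
  have cp: "cont_point \<mu> (tt i)" if "i \<le> m" for i
    using t[of i] that assms(4,5) unfolding tt_def by (cases "i = 0"; cases "i = m") auto
  have step: "tt i < tt (Suc i) \<and> tt (Suc i) - tt i < \<delta>" if "i < m" for i
  proof -
    have A: "a + real (Suc i) * h - h / 4 \<le> tt (Suc i)" using lo[of "Suc i"] that by simp
    have B: "tt (Suc i) \<le> a + real (Suc i) * h" using hi[of "Suc i"] that by simp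
    have C: "a + real i * h - h / 4 \<le> tt i" using lo[of i] that by simp
    have D: "tt i \<le> a + real i * h" using hi[of i] that by simp
    have E: "real (Suc i) * h = real i * h + h" by (simp add: algebra_simps)
    show ?thesis using A B C D E hpos hd by linarith
  qed
  show ?thesis
    by (rule exI[of _ m], rule exI[of _ tt]) (use mpos cp step in \<open>auto simp: tt_def\<close>)
qed




lemma bbf_sum:
  assumes "finite I" "\<And>i. i \<in> I \<Longrightarrow> bbf (f i)"
  shows "bbf (\<lambda>x. \<Sum>i\<in>I. f i x)"
  using assms
proof (induction I rule: finite_induct)
  case empty
  show ?case unfolding bbf_def by (simp add: exI[of _ 0])
next
  case (insert j I)
  have "bbf (\<lambda>x. f j x + (\<Sum>i\<in>I. f i x))"
    by (rule bbf_add) (use insert in auto)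
  then show ?case using insert(1,2) by simp
qed

lemma vague_from_intervals:
  assumes ms: "\<And>n. is_smeasure (\<mu>s n)" and m: "is_smeasure \<mu>" and bc: "bounded_on_compacts \<mu>s"
    and iv: "\<And>a b. cont_point \<mu> a \<Longrightarrow> cont_point \<mu> b \<Longrightarrow> a < b \<Longrightarrow>
       (\<lambda>n. sm (\<mu>s n) {a<..b}) \<longlonglongrightarrow> sm \<mu> {a<..b}"
  shows "vague_conv \<mu>s \<mu>"
  unfolding vague_conv_def
proof (intro allI impI, elim conjE exE)
  fix f :: "real \<Rightarrow> real" and K
  assume fc: "continuous_on UNIV f" and K: "compact K" and fK: "\<forall>x. x \<notin> K \<longrightarrow> f x = 0"
  obtain M1 where M1: "\<forall>x\<in>K. norm x \<le> M1" using compact_imp_bounded[OF K] bounded_iff by blast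
  define M where "M = max M1 0"
  have M: "\<forall>x\<in>K. norm x \<le> M"
  proof
    fix x assume "x \<in> K"
    then have "norm x \<le> M1" using M1 by blast
    then show "norm x \<le> M" unfolding M_def by simp
  qed
  have M0: "0 \<le> M" unfolding M_def by simp
  obtain a where a: "- M - 1 < a" "a < - M" "cont_point \<mu> a" using cont_exists[OF m, of "- M - 1" "- M"] by auto
  obtain b where b: "M < b" "b < M + 1" "cont_point \<mu> b" using cont_exists[OF m, of M "M + 1"] by auto
  have ab: "a < b" using a b M0 by linarith
  have fout: "f x = 0" if "x \<notin> {a<..b}" for x
  proof -
    have "x \<le> a \<or> b < x" using that by auto
    then have "\<bar>x\<bar> > M" using a b by auto
    have "x \<notin> K"
    proof
      assume "x \<in> K"
      then have "norm x \<le> M" using M by blast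
      then show False using \<open>\<bar>x\<bar> > M\<close> by simp
    qed
    then show ?thesis using fK by blast
  qed
  have "bdd_above (range (\<lambda>n. var (\<mu>s n) {a..b}))"
    by (rule bc[unfolded bounded_on_compacts_def, rule_format, OF compact_Icc])
  then obtain C where C0': "\<forall>y\<in>range (\<lambda>n. var (\<mu>s n) {a..b}). y \<le> C"
    unfolding bdd_above_def by blast
  have C: "var (\<mu>s n) {a..b} \<le> C" for n using C0' by blast
  define V where "V = var \<mu> {a..b}"
  have C0: "0 \<le> C" using C[of 0] var_nonneg[OF ms[of 0], of "{a..b}"] by simp
  have V0: "0 \<le> V" unfolding V_def using var_nonneg[OF m, of "{a..b}"] by simp
  have fm: "f \<in> borel_measurable borel" by (rule borel_measurable_continuous_onI[OF fc])
  obtain B where B: "\<forall>y\<in>f ` {a..b}. norm y \<le> B"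
    using compact_imp_bounded[OF compact_continuous_image[OF continuous_on_subset[OF fc] compact_Icc]]
    unfolding bounded_iff by blast
  have fB: "\<bar>f x\<bar> \<le> \<bar>B\<bar>" for x
  proof (cases "x \<in> {a..b}")
    case True
    then have "norm (f x) \<le> B" using B by blast
    then have "\<bar>f x\<bar> \<le> B" by simp
    then show ?thesis using abs_ge_self[of B] by linarith
  next
    case False then show ?thesis using fout[of x] by auto
  qed
  have bf: "bbf f" unfolding bbf_def using fm fB by blast
  have ufc: "uniformly_continuous_on {a..b} f"
    by (rule compact_uniformly_continuous[OF continuous_on_subset[OF fc] compact_Icc]) simp
  show "(\<lambda>n. sint (\<mu>s n) f) \<longlonglongrightarrow> sint \<mu> f"
    unfolding tendsto_iff dist_real_def
  proof (intro allI impI)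
    fix r :: real assume r: "0 < r"
    define \<eta> where "\<eta> = r / (4 * (C + V + 1))"
    have \<eta>: "0 < \<eta>" unfolding \<eta>_def using r C0 V0 by simp
    have \<eta>CV: "\<eta> * C + \<eta> * V < r / 2"
    proof -
      have nz: "4 * C + 4 * V + 4 \<noteq> 0" "C + V + 1 \<noteq> 0" using C0 V0 by linarith+
      have "\<eta> * (C + V + 1) = r / 4" unfolding \<eta>_def using nz by (simp add: field_simps)
      then show ?thesis using \<eta> r by (simp add: algebra_simps)
    qed
    obtain \<delta> where \<delta>: "0 < \<delta>" "\<forall>x\<in>{a..b}. \<forall>x'\<in>{a..b}. dist x' x < \<delta> \<longrightarrow> dist (f x') (f x) < \<eta>"
      using ufc[unfolded uniformly_continuous_on_def, rule_format, OF \<eta>] by blast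
    obtain mm tt where P: "mm > 0" "tt 0 = a" "tt mm = b" "\<forall>i\<le>mm. cont_point \<mu> (tt i)"
        "\<forall>i<mm. tt i < tt (Suc i) \<and> tt (Suc i) - tt i < \<delta>"
      using partition_exists[OF m ab \<delta>(1) a(3) b(3)] by blast
    have inc: "\<forall>i<mm. tt i < tt (Suc i)" using P(5) by blast
    define I where "I i = {tt (i - 1)<..tt i}" for i
    define g where "g x = (\<Sum>i\<in>{1..mm}. f (tt i) * indicator (I i) x)" for x
    have Is: "I i \<in> sets borel" for i unfolding I_def by simp
    have bg: "bbf g" unfolding g_def[abs_def]
      by (rule bbf_sum) (simp_all add: bbf_cmult bbf_indicator Is)
    have gint: "sint \<nu> g = (\<Sum>i\<in>{1..mm}. f (tt i) * sm \<nu> (I i))" if "is_smeasure \<nu>" for \<nu>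
    proof -
      have "sint \<nu> g = (\<Sum>i\<in>{1..mm}. sint \<nu> (\<lambda>x. f (tt i) * indicator (I i) x))"
        unfolding g_def[abs_def] by (rule sint_sum[OF that]) (simp_all add: bbf_cmult bbf_indicator Is)
      also have "\<dots> = (\<Sum>i\<in>{1..mm}. f (tt i) * sm \<nu> (I i))"
        by (rule sum.cong[OF refl], subst sint_cmult, subst sint_indicator[OF that Is], rule refl)
      finally show ?thesis .
    qed
    have gconv: "(\<lambda>n. sint (\<mu>s n) g) \<longlonglongrightarrow> sint \<mu> g"
      unfolding gint[OF ms] gint[OF m]
    proof (rule tendsto_sum, rule tendsto_mult_left)
      fix i assume i: "i \<in> {1..mm}"
      have i1: "i - 1 < mm" "Suc (i - 1) = i" using i by auto
      have "tt (i - 1) < tt (Suc (i - 1))" using inc i1(1) by blast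
      then have "tt (i - 1) < tt i" unfolding i1(2) .
      moreover have "cont_point \<mu> (tt (i - 1))" "cont_point \<mu> (tt i)" using P(4) i by auto
      ultimately show "(\<lambda>n. sm (\<mu>s n) (I i)) \<longlonglongrightarrow> sm \<mu> (I i)" unfolding I_def using iv by blast
    qed
    have ttab: "a \<le> tt i \<and> tt i \<le> b" if "i \<le> mm" for i
      using part_mono[OF inc, of 0 i] part_mono[OF inc, of i mm] that P(2,3) by auto
    have fg: "\<bar>f x - g x\<bar> \<le> \<eta>" for x
    proof (cases "x \<in> {a<..b}")
      case True
      then have "tt 0 < x" "x \<le> tt mm" using P(2,3) by auto
      from part_find[OF inc this] obtain j where j: "j \<in> {1..mm}" "tt (j - 1) < x" "x \<le> tt j" by blast
      have "g x = (\<Sum>i\<in>{1..mm}. if i = j then f (tt j) else 0)"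
        unfolding g_def
      proof (rule sum.cong[OF refl])
        fix i assume i: "i \<in> {1..mm}"
        show "f (tt i) * indicator (I i) x = (if i = j then f (tt j) else 0)"
        proof (cases "i = j")
          case True then show ?thesis using j unfolding I_def by simp
        next
          case False
          then have "x \<notin> I i" using part_unique[OF inc i j(1) _ _ j(2,3)] unfolding I_def by auto
          then show ?thesis using False by simp
        qed
      qed
      also have "\<dots> = f (tt j)" using j(1) by simp
      finally have gx: "g x = f (tt j)" .
      have j1: "j - 1 < mm" "Suc (j - 1) = j" using j(1) by auto
      have "tt (Suc (j - 1)) - tt (j - 1) < \<delta>" using P(5) j1(1) by blast
      then have "tt j - tt (j - 1) < \<delta>" unfolding j1(2) .
      then have "dist (tt j) x < \<delta>" using j by (simp add: dist_real_def)
      moreover have "x \<in> {a..b}" "tt j \<in> {a..b}" using True ttab[of j] j(1) by auto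
      ultimately have "dist (f (tt j)) (f x) < \<eta>" using \<delta>(2) by blast
      then show ?thesis unfolding gx dist_real_def by simp
    next
      case False
      have "x \<notin> I i" if "i \<in> {1..mm}" for i
      proof -
        have "a \<le> tt (i - 1)" "tt i \<le> b" using ttab[of "i - 1"] ttab[of i] that by auto
        then show ?thesis using False unfolding I_def by auto
      qed
      then have "g x = 0" unfolding g_def by simp
      then show ?thesis using fout[OF False] \<eta> by simp
    qed
    have fgout: "f x - g x = 0" if "x \<notin> {a..b}" for x
    proof -
      have "x \<notin> I i" if "i \<in> {1..mm}" for i
      proof -
        have "a \<le> tt (i - 1)" "tt i \<le> b" using ttab[of "i - 1"] ttab[of i] that by auto
        then show ?thesis using \<open>x \<notin> {a..b}\<close> unfolding I_def by auto
      qed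
      then have "g x = 0" unfolding g_def by simp
      then show ?thesis using fout[of x] that by auto
    qed
    have fgm: "(\<lambda>x. f x - g x) \<in> borel_measurable borel"
      using fm bg unfolding bbf_def by (intro borel_measurable_diff) auto
    have bnd: "\<bar>sint \<nu> f - sint \<nu> g\<bar> \<le> \<eta> * var \<nu> {a..b}" if "is_smeasure \<nu>" for \<nu>
    proof -
      have "\<bar>sint \<nu> (\<lambda>x. f x - g x)\<bar> \<le> \<eta> * var \<nu> {a..b}"
        by (rule sint_var_bound[OF that _ fgm fg fgout]) simp_all
      then show ?thesis using sint_diff[OF that bf bg] by simp
    qed
    have "eventually (\<lambda>n. \<bar>sint (\<mu>s n) g - sint \<mu> g\<bar> < r / 2) sequentially"
      by (rule gconv[unfolded tendsto_iff dist_real_def, rule_format]) (use r in simp)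
    then show "eventually (\<lambda>n. \<bar>sint (\<mu>s n) f - sint \<mu> f\<bar> < r) sequentially"
    proof (rule eventually_mono)
      fix n assume H: "\<bar>sint (\<mu>s n) g - sint \<mu> g\<bar> < r / 2"
      have b1: "\<bar>sint (\<mu>s n) f - sint (\<mu>s n) g\<bar> \<le> \<eta> * C"
      proof -
        have "\<eta> * var (\<mu>s n) {a..b} \<le> \<eta> * C" using C[of n] \<eta> by (intro mult_left_mono) auto
        then show ?thesis using bnd[OF ms, of n] by linarith
      qed
      have b2: "\<bar>sint \<mu> f - sint \<mu> g\<bar> \<le> \<eta> * V" using bnd[OF m] unfolding V_def .
      show "\<bar>sint (\<mu>s n) f - sint \<mu> f\<bar> < r" using H b1 b2 \<eta>CV by linarith
    qed
  qed
qed




lemma Fdist_ereal: "Fdist (ereal \<alpha>) \<nu> x = (if \<alpha> \<le> x then sm \<nu> {\<alpha><..x} else - sm \<nu> {x<..\<alpha>})"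
  by (simp add: Fdist_def)
lemma Fdist_minf: "Fdist (-\<infinity>) \<nu> x = sm \<nu> {..x}"
  by (simp add: Fdist_def)
lemma Fdist_pinf: "Fdist \<infinity> \<nu> x = - sm \<nu> {x<..}"
  by (simp add: Fdist_def)

lemma sm_split:
  assumes "is_smeasure \<nu>" "A \<in> sets borel" "B \<in> sets borel" "A \<inter> B = {}" "C = A \<union> B"
  shows "sm \<nu> C = sm \<nu> A + sm \<nu> B"
  unfolding assms(5) by (rule sm_Un[OF assms(1-4)])

lemma Fdiff_real:
  assumes "is_smeasure \<nu>" "a < b"
  shows "sm \<nu> {a<..b} = Fdist (ereal \<alpha>) \<nu> b - Fdist (ereal \<alpha>) \<nu> a"
proof (cases "\<alpha> \<le> a")
  case True
  have "sm \<nu> {\<alpha><..b} = sm \<nu> {\<alpha><..a} + sm \<nu> {a<..b}"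
    by (rule sm_split[OF assms(1)]) (use True assms(2) in auto)
  then show ?thesis using True assms(2) unfolding Fdist_ereal by simp
next
  case F: False
  show ?thesis
  proof (cases "\<alpha> \<le> b")
    case True
    have "sm \<nu> {a<..b} = sm \<nu> {a<..\<alpha>} + sm \<nu> {\<alpha><..b}"
      by (rule sm_split[OF assms(1)]) (use True F in auto)
    then show ?thesis using True F unfolding Fdist_ereal by simp
  next
    case False
    have "sm \<nu> {a<..\<alpha>} = sm \<nu> {a<..b} + sm \<nu> {b<..\<alpha>}"
      by (rule sm_split[OF assms(1)]) (use False assms(2) in auto)
    then show ?thesis using False F unfolding Fdist_ereal by simp
  qed
qed

lemma Fdiff_minf:
  assumes "is_smeasure \<nu>" "a < b"
  shows "sm \<nu> {a<..b} = Fdist (-\<infinity>) \<nu> b - Fdist (-\<infinity>) \<nu> a"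
proof -
  have "{..b} = {..a} \<union> {a<..b}" using assms(2) by auto
  moreover have "{..a} \<inter> {a<..b} = {}" by auto
  then have "sm \<nu> ({..a} \<union> {a<..b}) = sm \<nu> {..a} + sm \<nu> {a<..b}"
    by (intro sm_Un[OF assms(1)]) auto
  ultimately have "sm \<nu> {..b} = sm \<nu> {..a} + sm \<nu> {a<..b}" by simp
  then show ?thesis unfolding Fdist_minf by simp
qed

lemma Fdiff_pinf:
  assumes "is_smeasure \<nu>" "a < b"
  shows "sm \<nu> {a<..b} = Fdist \<infinity> \<nu> b - Fdist \<infinity> \<nu> a"
proof -
  have "sm \<nu> {a<..} = sm \<nu> {a<..b} + sm \<nu> {b<..}"
    by (rule sm_split[OF assms(1)]) (use assms(2) in auto)
  then show ?thesis unfolding Fdist_pinf by simp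
qed

lemma iv_from_F:
  assumes ms: "\<And>n. is_smeasure (\<mu>s n)" and m: "is_smeasure \<mu>" and F: "Fconv \<beta> \<mu>s \<mu>"
    and diff: "\<And>\<nu> a b. is_smeasure \<nu> \<Longrightarrow> a < b \<Longrightarrow> sm \<nu> {a<..b} = Fdist \<beta> \<nu> b - Fdist \<beta> \<nu> a"
    and ca: "cont_point \<mu> a" and cb: "cont_point \<mu> b" and ab: "a < b"
  shows "(\<lambda>n. sm (\<mu>s n) {a<..b}) \<longlonglongrightarrow> sm \<mu> {a<..b}"
proof -
  have "(\<lambda>n. Fdist \<beta> (\<mu>s n) b - Fdist \<beta> (\<mu>s n) a) \<longlonglongrightarrow> Fdist \<beta> \<mu> b - Fdist \<beta> \<mu> a"
    using F ca cb unfolding Fconv_def by (intro tendsto_diff) auto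
  then show ?thesis using diff[OF ms ab] diff[OF m ab] by simp
qed

lemma partB_real:
  assumes ms: "\<And>n. is_smeasure (\<mu>s n)" and m: "is_smeasure \<mu>" and vc: "vague_conv \<mu>s \<mu>"
    and c\<alpha>: "cont_point \<mu> \<alpha>" and nm: "\<forall>x. cont_point \<mu> x \<longrightarrow> no_mass_at \<mu>s x"
  shows "Fconv (ereal \<alpha>) \<mu>s \<mu>"
  unfolding Fconv_def
proof (intro allI impI)
  fix x assume cx: "cont_point \<mu> x"
  consider "\<alpha> = x" | "\<alpha> < x" | "x < \<alpha>" by linarith
  then show "(\<lambda>n. Fdist (ereal \<alpha>) (\<mu>s n) x) \<longlonglongrightarrow> Fdist (ereal \<alpha>) \<mu> x"
  proof cases
    case 1
    then show ?thesis unfolding Fdist_ereal by (simp add: sm_def)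
  next
    case 2
    have "(\<lambda>n. sm (\<mu>s n) {\<alpha><..x}) \<longlonglongrightarrow> sm \<mu> {\<alpha><..x}"
      by (rule interval_conv[OF ms m vc c\<alpha> cx 2]) (use nm c\<alpha> cx in blast)+
    then show ?thesis using 2 unfolding Fdist_ereal by simp
  next
    case 3
    have "(\<lambda>n. sm (\<mu>s n) {x<..\<alpha>}) \<longlonglongrightarrow> sm \<mu> {x<..\<alpha>}"
      by (rule interval_conv[OF ms m vc cx c\<alpha> 3]) (use nm c\<alpha> cx in blast)+
    then show ?thesis using 3 unfolding Fdist_ereal by (simp add: tendsto_minus)
  qed
qed

lemma partB_minf:
  assumes ms: "\<And>n. is_smeasure (\<mu>s n)" and m: "is_smeasure \<mu>" and vc: "vague_conv \<mu>s \<mu>"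
    and nmi: "no_mass_at_minf \<mu>s" and nm: "\<forall>x. cont_point \<mu> x \<longrightarrow> no_mass_at \<mu>s x"
  shows "Fconv (-\<infinity>) \<mu>s \<mu>"
  unfolding Fconv_def Fdist_minf
proof (intro allI impI)
  fix x assume cx: "cont_point \<mu> x"
  show "(\<lambda>n. sm (\<mu>s n) {..x}) \<longlonglongrightarrow> sm \<mu> {..x}"
    unfolding tendsto_iff dist_real_def
  proof (intro allI impI)
    fix r :: real assume r: "0 < r"
    define \<epsilon> where "\<epsilon> = r / 4"
    have \<epsilon>: "0 < \<epsilon>" unfolding \<epsilon>_def using r by simp
    obtain c0 where c0: "limsup (\<lambda>n. ereal (var (\<mu>s n) {..<c0})) \<le> ereal \<epsilon>"
      using nmi \<epsilon> unfolding no_mass_at_minf_def by blast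
    obtain R where R: "\<forall>c\<le>R. \<bar>sm \<mu> {..c}\<bar> < \<epsilon>" using sm_tail_bot[OF m \<epsilon>] by blast
    define L where "L = min (min c0 R) x"
    obtain c where c: "L - 1 < c" "c < L" "cont_point \<mu> c" using cont_exists[OF m, of "L - 1" L] by auto
    have cL: "c < c0" "c \<le> R" "c < x" using c(2) unfolding L_def by auto
    have evA: "eventually (\<lambda>n. var (\<mu>s n) {..<c0} < 2 * \<epsilon>) sequentially"
      by (rule limsup_ev[OF c0]) (use \<epsilon> in simp)
    have "(\<lambda>n. sm (\<mu>s n) {c<..x}) \<longlonglongrightarrow> sm \<mu> {c<..x}"
      by (rule interval_conv[OF ms m vc c(3) cx cL(3)]) (use nm c(3) cx in blast)+
    then have evI: "eventually (\<lambda>n. \<bar>sm (\<mu>s n) {c<..x} - sm \<mu> {c<..x}\<bar> < \<epsilon>) sequentially"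
      using \<epsilon> unfolding tendsto_iff dist_real_def by blast
    have split: "sm \<nu> {..x} = sm \<nu> {..c} + sm \<nu> {c<..x}" if "is_smeasure \<nu>" for \<nu>
    proof -
      have "{..x} = {..c} \<union> {c<..x}" using cL(3) by auto
      moreover have "{..c} \<inter> {c<..x} = {}" by auto
      then have "sm \<nu> ({..c} \<union> {c<..x}) = sm \<nu> {..c} + sm \<nu> {c<..x}"
        by (intro sm_Un[OF that]) auto
      ultimately show ?thesis by simp
    qed
    have Rc: "\<bar>sm \<mu> {..c}\<bar> < \<epsilon>" using R cL(2) by blast
    show "eventually (\<lambda>n. \<bar>sm (\<mu>s n) {..x} - sm \<mu> {..x}\<bar> < r) sequentially"
    proof (rule eventually_mono[OF eventually_conj[OF evA evI]])
      fix n assume H: "var (\<mu>s n) {..<c0} < 2 * \<epsilon> \<and> \<bar>sm (\<mu>s n) {c<..x} - sm \<mu> {c<..x}\<bar> < \<epsilon>"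
      have "\<bar>sm (\<mu>s n) {..c}\<bar> \<le> var (\<mu>s n) {..<c0}"
        by (rule sm_le_var[OF ms]) (use cL(1) in auto)
      then show "\<bar>sm (\<mu>s n) {..x} - sm \<mu> {..x}\<bar> < r"
        using H Rc split[OF ms, of n] split[OF m] unfolding \<epsilon>_def by linarith
    qed
  qed
qed

lemma partB_pinf:
  assumes ms: "\<And>n. is_smeasure (\<mu>s n)" and m: "is_smeasure \<mu>" and vc: "vague_conv \<mu>s \<mu>"
    and nmi: "no_mass_at_pinf \<mu>s" and nm: "\<forall>x. cont_point \<mu> x \<longrightarrow> no_mass_at \<mu>s x"
  shows "Fconv \<infinity> \<mu>s \<mu>"
  unfolding Fconv_def Fdist_pinf
proof (intro allI impI)
  fix x assume cx: "cont_point \<mu> x"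
  have "(\<lambda>n. sm (\<mu>s n) {x<..}) \<longlonglongrightarrow> sm \<mu> {x<..}"
    unfolding tendsto_iff dist_real_def
  proof (intro allI impI)
    fix r :: real assume r: "0 < r"
    define \<epsilon> where "\<epsilon> = r / 4"
    have \<epsilon>: "0 < \<epsilon>" unfolding \<epsilon>_def using r by simp
    obtain c0 where c0: "limsup (\<lambda>n. ereal (var (\<mu>s n) {c0<..})) \<le> ereal \<epsilon>"
      using nmi \<epsilon> unfolding no_mass_at_pinf_def by blast
    obtain R where R: "\<forall>c\<ge>R. \<bar>sm \<mu> {c<..}\<bar> < \<epsilon>" using sm_tail_top[OF m \<epsilon>] by blast
    define L where "L = max (max c0 R) x"
    obtain c where c: "L < c" "c < L + 1" "cont_point \<mu> c" using cont_exists[OF m, of L "L + 1"] by auto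
    have cL: "c0 < c" "R \<le> c" "x < c" using c(1) unfolding L_def by auto
    have evA: "eventually (\<lambda>n. var (\<mu>s n) {c0<..} < 2 * \<epsilon>) sequentially"
      by (rule limsup_ev[OF c0]) (use \<epsilon> in simp)
    have "(\<lambda>n. sm (\<mu>s n) {x<..c}) \<longlonglongrightarrow> sm \<mu> {x<..c}"
      by (rule interval_conv[OF ms m vc cx c(3) cL(3)]) (use nm c(3) cx in blast)+
    then have evI: "eventually (\<lambda>n. \<bar>sm (\<mu>s n) {x<..c} - sm \<mu> {x<..c}\<bar> < \<epsilon>) sequentially"
      using \<epsilon> unfolding tendsto_iff dist_real_def by blast
    have split: "sm \<nu> {x<..} = sm \<nu> {x<..c} + sm \<nu> {c<..}" if "is_smeasure \<nu>" for \<nu>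
    proof -
      have "{x<..} = {x<..c} \<union> {c<..}" using cL(3) by auto
      moreover have "{x<..c} \<inter> {c<..} = {}" by auto
      then have "sm \<nu> ({x<..c} \<union> {c<..}) = sm \<nu> {x<..c} + sm \<nu> {c<..}"
        by (intro sm_Un[OF that]) auto
      ultimately show ?thesis by simp
    qed
    have Rc: "\<bar>sm \<mu> {c<..}\<bar> < \<epsilon>" using R cL(2) by blast
    show "eventually (\<lambda>n. \<bar>sm (\<mu>s n) {x<..} - sm \<mu> {x<..}\<bar> < r) sequentially"
    proof (rule eventually_mono[OF eventually_conj[OF evA evI]])
      fix n assume H: "var (\<mu>s n) {c0<..} < 2 * \<epsilon> \<and> \<bar>sm (\<mu>s n) {x<..c} - sm \<mu> {x<..c}\<bar> < \<epsilon>"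
      have "\<bar>sm (\<mu>s n) {c<..}\<bar> \<le> var (\<mu>s n) {c0<..}"
        by (rule sm_le_var[OF ms]) (use cL(1) in auto)
      then show "\<bar>sm (\<mu>s n) {x<..} - sm \<mu> {x<..}\<bar> < r"
        using H Rc split[OF ms, of n] split[OF m] unfolding \<epsilon>_def by linarith
    qed
  qed
  then show "(\<lambda>n. - sm (\<mu>s n) {x<..}) \<longlonglongrightarrow> - sm \<mu> {x<..}" by (rule tendsto_minus)
qed

theorem theorem3p8:
  fixes \<alpha> :: real and \<mu>s :: "nat \<Rightarrow> smeasure" and \<mu> :: smeasure
  assumes "\<And>n. is_smeasure (\<mu>s n)" and "is_smeasure \<mu>"
  shows
    "(Fconv (ereal \<alpha>) \<mu>s \<mu> \<and> bounded_on_compacts \<mu>s \<longrightarrow> vague_conv \<mu>s \<mu>)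
   \<and> (vague_conv \<mu>s \<mu> \<and> cont_point \<mu> \<alpha> \<and> (\<forall>x. cont_point \<mu> x \<longrightarrow> no_mass_at \<mu>s x)
        \<longrightarrow> Fconv (ereal \<alpha>) \<mu>s \<mu>)
   \<and> (Fconv (-\<infinity>) \<mu>s \<mu> \<and> bounded_on_compacts \<mu>s
        \<and> (\<forall>c. bdd_above (range (\<lambda>n. var (\<mu>s n) {..c}))) \<longrightarrow> vague_conv \<mu>s \<mu>)
   \<and> (vague_conv \<mu>s \<mu> \<and> no_mass_at_minf \<mu>s \<and> (\<forall>x. cont_point \<mu> x \<longrightarrow> no_mass_at \<mu>s x)
        \<longrightarrow> Fconv (-\<infinity>) \<mu>s \<mu>)
   \<and> (Fconv \<infinity> \<mu>s \<mu> \<and> bounded_on_compacts \<mu>s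
        \<and> (\<forall>c. bdd_above (range (\<lambda>n. var (\<mu>s n) {c<..}))) \<longrightarrow> vague_conv \<mu>s \<mu>)
   \<and> (vague_conv \<mu>s \<mu> \<and> no_mass_at_pinf \<mu>s \<and> (\<forall>x. cont_point \<mu> x \<longrightarrow> no_mass_at \<mu>s x)
        \<longrightarrow> Fconv \<infinity> \<mu>s \<mu>)"
proof (intro conjI impI; elim conjE)
  assume F: "Fconv (ereal \<alpha>) \<mu>s \<mu>" and bc: "bounded_on_compacts \<mu>s"
  show "vague_conv \<mu>s \<mu>"
    by (rule vague_from_intervals[OF assms bc iv_from_F[OF assms F Fdiff_real]])
next
  assume "vague_conv \<mu>s \<mu>" "cont_point \<mu> \<alpha>" "\<forall>x. cont_point \<mu> x \<longrightarrow> no_mass_at \<mu>s x"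
  then show "Fconv (ereal \<alpha>) \<mu>s \<mu>" by (rule partB_real[OF assms])
next
  assume F: "Fconv (-\<infinity>) \<mu>s \<mu>" and bc: "bounded_on_compacts \<mu>s"
  show "vague_conv \<mu>s \<mu>"
    by (rule vague_from_intervals[OF assms bc iv_from_F[OF assms F Fdiff_minf]])
next
  assume "vague_conv \<mu>s \<mu>" "no_mass_at_minf \<mu>s" "\<forall>x. cont_point \<mu> x \<longrightarrow> no_mass_at \<mu>s x"
  then show "Fconv (-\<infinity>) \<mu>s \<mu>" by (rule partB_minf[OF assms])
next
  assume F: "Fconv \<infinity> \<mu>s \<mu>" and bc: "bounded_on_compacts \<mu>s"
  show "vague_conv \<mu>s \<mu>"
    by (rule vague_from_intervals[OF assms bc iv_from_F[OF assms F Fdiff_pinf]])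
next
  assume "vague_conv \<mu>s \<mu>" "no_mass_at_pinf \<mu>s" "\<forall>x. cont_point \<mu> x \<longrightarrow> no_mass_at \<mu>s x"
  then show "Fconv \<infinity> \<mu>s \<mu>" by (rule partB_pinf[OF assms])
qed


end
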